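(* Let $X_1,\dots,X_n$ be independent Rademacher random variables, $d\le n$, and $f:\{-1,+1\}^n\to\mathbb{R}$ of the form $f(x)=\sum_{S\subseteq[n],|S|\le d}\hat f_Sx_S$. Then for every $t>0$, \[ \mathbb{P}\big(|f(X)-\mathbb{E}f(X)|\ge t\big)\le\exp\Big(1-\min_{j=1,\dots,d}\Big(\frac{t}{de\,\mathrm{W}_j(f)^{1/2}}\Big)^{2/j}\Big). \] Equivalently, with probability at least $1-\exp(1-t)$, $|f(X)-\mathbb{E}f(X)|\le de\max_{j=1,\dots,d}(\mathrm{W}_j(f)t^j)^{1/2}$.
   Context: $\mathbb{P}(X_i=1)=\mathbb{P}(X_i=-1)=1/2$. For $S\subseteq[n]$, $x_S=\prod_{i\in S}x_i$; $\hat f_S=\mathbb{E}[X_Sf(X)]$ are the Fourier–Walsh coefficients, and $\mathrm{W}_j(f)=\sum_{|S|=j}\hat f_S^2$ is the Fourier weight of order $j$ (terms with $\mathrm{W}_j(f)=0$ are interpreted as $+\infty$ in the minimum). *)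

theory Defs
  imports "HOL-Probability.Probability"
begin

definition cube :: "nat \<Rightarrow> (nat \<Rightarrow> real) set" where
  "cube n = ({..<n} \<rightarrow>\<^sub>E {-1, 1})"

text \<open>Uniform distribution on the cube = law of independent Rademacher variables X_1..X_n.\<close>
definition rad :: "nat \<Rightarrow> (nat \<Rightarrow> real) pmf" where
  "rad n = pmf_of_set (cube n)"

definition chi :: "nat set \<Rightarrow> (nat \<Rightarrow> real) \<Rightarrow> real" where
  "chi S x = (\<Prod>i\<in>S. x i)"

definition fourier :: "nat \<Rightarrow> ((nat \<Rightarrow> real) \<Rightarrow> real) \<Rightarrow> nat set \<Rightarrow> real" where
  "fourier n f S = measure_pmf.expectation (rad n) (\<lambda>x. chi S x * f x)"

definition weight :: "nat \<Rightarrow> ((nat \<Rightarrow> real) \<Rightarrow> real) \<Rightarrow> nat \<Rightarrow> real" where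
  "weight n f j = (\<Sum>S\<in>{S. S \<subseteq> {..<n} \<and> card S = j}. (fourier n f S)\<^sup>2)"

end

theory Submission
  imports Defs
begin

lemma cube_finite[simp]: "finite (cube n)"
  unfolding cube_def by (auto intro!: finite_PiE)

lemma cube_card: "card (cube n) = 2 ^ n"
  unfolding cube_def by (simp add: card_PiE numeral_2_eq_2)

lemma cube_ne[simp]: "cube n \<noteq> {}"
  using cube_card[of n] by (metis card.empty power_not_zero zero_neq_numeral)

lemma cube_Suc_eq: "cube (Suc n) = (\<lambda>(y, g). g(n := y)) ` ({-1,1} \<times> cube n)"
  unfolding cube_def lessThan_Suc by (simp add: PiE_insert_eq)

lemma sum_cube_Suc:
  "(\<Sum>x\<in>cube (Suc n). F x) = (\<Sum>x\<in>cube n. F (x(n := 1)) + F (x(n := -1)))"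
proof -
  have inj: "inj_on (\<lambda>(y, g). g(n := y)) ({-1::real,1} \<times> cube n)"
    unfolding cube_def using inj_combinator[of n "{..<n}" "\<lambda>_. {-1::real,1}"] by simp
  have "(\<Sum>x\<in>cube (Suc n). F x) = (\<Sum>p\<in>{-1::real,1} \<times> cube n. F ((\<lambda>(y, g). g(n := y)) p))"
    unfolding cube_Suc_eq sum.reindex[OF inj] by (simp add: o_def)
  also have "\<dots> = (\<Sum>y\<in>{-1::real,1}. \<Sum>g\<in>cube n. F (g(n := y)))"
    by (subst sum.cartesian_product) (simp add: case_prod_beta)
  also have "\<dots> = (\<Sum>x\<in>cube n. F (x(n := 1)) + F (x(n := -1)))"
    by (simp add: sum.distrib add.commute)
  finally show ?thesis .
qed

lemma chi_upd_notin: "n \<notin> S \<Longrightarrow> chi S (x(n := v)) = chi S x"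
  unfolding chi_def by (intro prod.cong) auto

lemma chi_upd_insert: assumes "n \<notin> T" "finite T" shows "chi (insert n T) (x(n := v)) = v * chi T x"
proof -
  have "(\<Prod>i\<in>T. (x(n := v)) i) = prod x T"
    using chi_upd_notin[of n T x v] \<open>n \<notin> T\<close> unfolding chi_def by simp
  then show ?thesis unfolding chi_def using \<open>n \<notin> T\<close> \<open>finite T\<close> by simp
qed

lemma chi_as_prod: assumes "S \<subseteq> {..<n}" shows "chi S x = (\<Prod>i<n. if i \<in> S then x i else 1)"
proof -
  have "(\<Prod>i<n. if i \<in> S then x i else 1) = prod x {i\<in>{..<n}. i \<in> S}"
    by (subst prod.inter_filter) auto
  also have "{i\<in>{..<n}. i \<in> S} = S" using \<open>S \<subseteq> {..<n}\<close> by auto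
  finally show ?thesis unfolding chi_def by simp
qed

lemma chi_orth:
  assumes "S \<subseteq> {..<n}" "T \<subseteq> {..<n}"
  shows "(\<Sum>x\<in>cube n. chi S x * chi T x) = (if S = T then 2 ^ n else 0)"
proof -
  have "(\<Sum>x\<in>cube n. chi S x * chi T x)
      = (\<Sum>x\<in>cube n. \<Prod>i<n. (if i \<in> S then x i else 1) * (if i \<in> T then x i else 1))"
    using assms by (simp add: chi_as_prod prod.distrib)
  also have "\<dots> = (\<Prod>i<n. \<Sum>y\<in>{-1::real,1}. (if i \<in> S then y else 1) * (if i \<in> T then y else 1))"
    unfolding cube_def by (subst prod_sum_PiE) auto
  also have "\<dots> = (\<Prod>i<n. if (i \<in> S) = (i \<in> T) then 2 else 0)"
    by (intro prod.cong) auto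
  also have "\<dots> = (if S = T then 2 ^ n else 0)"
  proof (cases "S = T")
    case False
    then obtain i where "i < n" "(i \<in> S) \<noteq> (i \<in> T)" using assms by blast
    then show ?thesis using False by (subst prod_zero) auto
  qed simp
  finally show ?thesis .
qed

lemma choose_step: "Suc i * (m choose Suc i) = (m - i) * (m choose i)"
  using binomial_absorption[of i m] binomial_absorb_comp[of m i] by simp

lemma binom_cmp:
  assumes "l \<le> k"
  shows "real (2*k choose (2*l)) \<le> real (k choose l) * (2 * real k - 1) ^ l"
  using assms
proof (induction l)
  case 0
  then show ?case by simp
next
  case (Suc l)
  define c where "c = 2 * real k - 1"
  have lk: "l < k" using Suc.prems by simp
  have c1: "c \<ge> 1" using lk unfolding c_def by simp
  have IH: "real (2*k choose (2*l)) \<le> real (k choose l) * c ^ l" using Suc lk unfolding c_def by simp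
  have n1: "Suc (2*l) * (2*k choose Suc (2*l)) = (2*k - 2*l) * (2*k choose (2*l))"
    using choose_step[of "2*l" "2*k"] by simp
  have n2: "Suc (Suc (2*l)) * (2*k choose Suc (Suc (2*l))) = (2*k - Suc (2*l)) * (2*k choose Suc (2*l))"
    using choose_step[of "Suc (2*l)" "2*k"] by simp
  have n3: "Suc l * (k choose Suc l) = (k - l) * (k choose l)"
    using choose_step[of l k] by simp
  define B0 where "B0 = real (2*k choose (2*l))"
  define B1 where "B1 = real (2*k choose Suc (2*l))"
  define B2 where "B2 = real (2*k choose (2 * Suc l))"
  define C0 where "C0 = real (k choose l)"
  define C1 where "C1 = real (k choose Suc l)"
  have r1: "(2*real l + 1) * B1 = (2*real k - 2*real l) * B0"
    using arg_cong[OF n1, of real] lk unfolding B0_def B1_def by (simp add: of_nat_diff algebra_simps)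
  have r2: "(2*real l + 2) * B2 = (2*real k - 2*real l - 1) * B1"
  proof -
    have eq: "real (Suc (Suc (2*l)) * (2*k choose Suc (Suc (2*l)))) = real ((2*k - Suc (2*l)) * (2*k choose Suc (2*l)))"
      by (simp only: n2)
    have d: "real (2*k - Suc (2*l)) = 2*real k - 2*real l - 1" using lk by (simp add: of_nat_diff)
    have s: "2 * Suc l = Suc (Suc (2*l))" by simp
    show ?thesis using eq unfolding B2_def B1_def s of_nat_mult d by (simp add: add.commute)
  qed
  have r3: "(real l + 1) * C1 = (real k - real l) * C0"
    using arg_cong[OF n3, of real] lk unfolding C0_def C1_def by (simp add: of_nat_diff algebra_simps)
  have pos: "B0 \<ge> 0" "C0 \<ge> 0" "C1 \<ge> 0" unfolding B0_def C0_def C1_def by auto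
  have IH': "B0 \<le> C0 * c ^ l" using IH unfolding B0_def C0_def .
  have kl: "real k - real l \<ge> 1" using lk by linarith
  have "(2*real l + 1) * (2*real l + 2) * B2 = (2*real k - 2*real l - 1) * (2*real k - 2*real l) * B0"
    using r1 r2 by (metis mult.assoc mult.commute)
  also have "\<dots> \<le> (2*real k - 2*real l - 1) * (2*real k - 2*real l) * (C0 * c ^ l)"
    using IH' kl by (intro mult_left_mono) auto
  also have "\<dots> = (2*real k - 2*real l - 1) * 2 * ((real k - real l) * C0) * c ^ l"
    by (simp add: algebra_simps)
  also have "\<dots> = (2*real k - 2*real l - 1) * 2 * ((real l + 1) * C1) * c ^ l"
    using r3 by simp
  also have "\<dots> \<le> (c * (2 * real l + 1)) * 2 * ((real l + 1) * C1) * c ^ l"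
    using pos c1 unfolding c_def by (intro mult_right_mono) (auto simp: algebra_simps)
  also have "\<dots> = (2*real l + 1) * (2*real l + 2) * (C1 * c ^ Suc l)"
    by (simp add: algebra_simps)
  finally have "(2*real l + 1) * (2*real l + 2) * B2 \<le> (2*real l + 1) * (2*real l + 2) * (C1 * c ^ Suc l)" .
  then have "B2 \<le> C1 * c ^ Suc l"
    by (rule mult_left_le_imp_le) simp
  then show ?case unfolding B2_def C1_def c_def .
qed

lemma sum_even_odd: fixes k :: nat and g :: "nat \<Rightarrow> 'a::comm_monoid_add" shows "(\<Sum>i\<le>2*k. g i) = (\<Sum>l\<le>k. g (2*l)) + (\<Sum>l<k. g (2*l+1))"
proof (induction k)
  case 0
  then show ?case by simp
next
  case (Suc k)
  have "{..2 * Suc k} = insert (Suc (Suc (2*k))) (insert (Suc (2*k)) {..2*k})" by auto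
  then have "(\<Sum>i\<le>2*Suc k. g i) = g (Suc (Suc (2*k))) + g (Suc (2*k)) + (\<Sum>i\<le>2*k. g i)"
    by (simp add: add.assoc)
  then show ?case using Suc by (simp add: add_ac)
qed

lemma even_expand:
  fixes d e :: real
  shows "((e + d)^(2*k) + (e - d)^(2*k))/2 = (\<Sum>l\<le>k. real (2*k choose (2*l)) * (d^2)^l * (e^2)^(k-l))"
proof -
  have "(e + d)^(2*k) + (e - d)^(2*k) = (d + e)^(2*k) + ((-d) + e)^(2*k)" by (simp add: add.commute)
  also have "\<dots> = (\<Sum>i\<le>2*k. real (2*k choose i) * (d^i + (-d)^i) * e^(2*k-i))"
    unfolding binomial_ring by (simp add: sum.distrib[symmetric] algebra_simps)
  also have "\<dots> = (\<Sum>l\<le>k. real (2*k choose (2*l)) * (d^(2*l) + (-d)^(2*l)) * e^(2*k-2*l))"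
    unfolding sum_even_odd by simp
  also have "\<dots> = (\<Sum>l\<le>k. 2 * (real (2*k choose (2*l)) * (d^2)^l * (e^2)^(k-l)))"
  proof (intro sum.cong refl)
    fix l assume "l \<in> {..k}"
    then have "2*k - 2*l = 2*(k-l)" by simp
    then show "real (2*k choose (2*l)) * (d^(2*l) + (-d)^(2*l)) * e^(2*k-2*l) = 2 * (real (2*k choose (2*l)) * (d^2)^l * (e^2)^(k-l))"
      by (simp add: power_mult)
  qed
  finally show ?thesis by (simp add: sum_distrib_left[symmetric])
qed

lemma amgm:
  fixes x y :: real
  assumes "x \<ge> 0" "y \<ge> 0" "l \<le> k" "k > 0"
  shows "x^l * y^(k-l) * real k \<le> real l * x^k + real (k-l) * y^k"
proof (cases "x = 0 \<or> y = 0 \<or> l = 0 \<or> l = k")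
  case True
  then show ?thesis using assms by (auto simp: power_0_left of_nat_diff)
next
  case False
  then have xy: "x > 0" "y > 0" and l: "0 < l" "l < k" using assms by auto
  have "(x^k) powr (real l / real k) * (y^k) powr (real (k-l) / real k)
        \<le> (real l / real k) * x^k + (real (k-l) / real k) * y^k"
    using xy l by (intro Youngs_inequality_0) (auto simp: of_nat_diff field_simps)
  moreover have "(x^k) powr (real l / real k) = x^l"
    using xy l by (simp add: powr_realpow[symmetric] powr_powr)
  moreover have "(y^k) powr (real (k-l) / real k) = y^(k-l)"
    using xy l by (simp add: powr_realpow[symmetric] powr_powr)
  ultimately have "x^l * y^(k-l) \<le> (real l / real k) * x^k + (real (k-l) / real k) * y^k" by simp
  then show ?thesis using l by (simp add: field_simps)
qed

definition ex :: "nat \<Rightarrow> ((nat \<Rightarrow> real) \<Rightarrow> real) \<Rightarrow> real" where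
  "ex n h = (\<Sum>x\<in>cube n. h x) / 2 ^ n"

lemma ex_Suc: "ex (Suc n) G = ex n (\<lambda>x. (G (x(n := 1)) + G (x(n := -1))) / 2)"
  unfolding ex_def sum_cube_Suc by (simp add: sum_divide_distrib[symmetric])

lemma ex_cong: "(\<And>x. x \<in> cube n \<Longrightarrow> F x = G x) \<Longrightarrow> ex n F = ex n G"
  unfolding ex_def by (simp cong: sum.cong)

lemma ex_const: "(\<And>x. x \<in> cube n \<Longrightarrow> F x = a) \<Longrightarrow> ex n F = a"
  unfolding ex_def using cube_card[of n] by (simp cong: sum.cong)

lemma ex_sum: "finite L \<Longrightarrow> ex n (\<lambda>x. \<Sum>l\<in>L. F l x) = (\<Sum>l\<in>L. ex n (F l))"
  unfolding ex_def by (subst sum.swap) (simp add: sum_divide_distrib)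

lemma ex_cmult: "ex n (\<lambda>x. a * F x) = a * ex n F"
  unfolding ex_def by (simp add: sum_distrib_left)

lemma ex_cdiv: "ex n (\<lambda>x. F x / a) = ex n F / a"
  using ex_cmult[of n "1/a" F] by simp

lemma ex_add: "ex n (\<lambda>x. F x + G x) = ex n F + ex n G"
  unfolding ex_def by (simp add: sum.distrib add_divide_distrib)

lemma ex_mono: "(\<And>x. x \<in> cube n \<Longrightarrow> F x \<le> G x) \<Longrightarrow> ex n F \<le> ex n G"
  unfolding ex_def by (intro divide_right_mono sum_mono) auto

lemma ex_nonneg: "(\<And>x. x \<in> cube n \<Longrightarrow> F x \<ge> 0) \<Longrightarrow> ex n F \<ge> 0"
  unfolding ex_def by (intro divide_nonneg_pos sum_nonneg) auto

lemma ex_zero: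
  assumes "\<And>x. x \<in> cube n \<Longrightarrow> F x \<ge> 0" "ex n F \<le> 0" "x \<in> cube n"
  shows "F x = 0"
proof -
  have "(\<Sum>x\<in>cube n. F x) = ex n F * 2 ^ n" unfolding ex_def by simp
  then have "(\<Sum>x\<in>cube n. F x) \<le> 0" using assms(2) by (simp add: mult_nonpos_nonneg)
  moreover have "(\<Sum>x\<in>cube n. F x) \<ge> 0" using assms(1) by (intro sum_nonneg) auto
  ultimately have "(\<Sum>x\<in>cube n. F x) = 0" by simp
  then show ?thesis using assms(1,3) sum_nonneg_eq_0_iff[of "cube n" F] by auto
qed


definition deg :: "nat \<Rightarrow> nat \<Rightarrow> ((nat \<Rightarrow> real) \<Rightarrow> real) \<Rightarrow> bool" where
  "deg n j h \<longleftrightarrow> (\<exists>a. (\<forall>S. S \<subseteq> {..<n} \<longrightarrow> j < card S \<longrightarrow> a S = 0) \<and>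
                     (\<forall>x\<in>cube n. h x = (\<Sum>S\<in>Pow {..<n}. a S * chi S x)))"

lemma deg_const:
  assumes "deg n j h" "j = 0 \<or> n = 0"
  shows "\<exists>a. \<forall>x\<in>cube n. h x = a"
proof -
  obtain a where a: "\<forall>S. S \<subseteq> {..<n} \<longrightarrow> j < card S \<longrightarrow> a S = 0"
      "\<forall>x\<in>cube n. h x = (\<Sum>S\<in>Pow {..<n}. a S * chi S x)"
    using assms(1) unfolding deg_def by blast
  have z: "a S = 0" if "S \<in> Pow {..<n} - {{}}" for S
  proof -
    have "S \<subseteq> {..<n}" "S \<noteq> {}" using that by auto
    moreover have "finite S" using \<open>S \<subseteq> {..<n}\<close> finite_subset by blast
    ultimately show ?thesis using a(1) assms(2) by (auto simp: card_gt_0_iff)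
  qed
  have "h x = a {}" if "x \<in> cube n" for x
  proof -
    have "h x = a {} * chi {} x + (\<Sum>S\<in>Pow {..<n} - {{}}. a S * chi S x)"
      using a(2) that by (subst sum.remove[symmetric]) auto
    also have "\<dots> = a {}" using z by (simp add: chi_def)
    finally show ?thesis .
  qed
  then show ?thesis by blast
qed


lemma inj_on_insert_n: "inj_on (insert n) (Pow {..<n::nat})"
proof (rule inj_onI)
  fix A B assume AB: "A \<in> Pow {..<n}" "B \<in> Pow {..<n}" "insert n A = insert n B"
  then have "n \<notin> A" "n \<notin> B" by auto
  then show "A = B" using AB(3) by (metis Diff_insert_absorb)
qed



lemma deg_split:
  assumes "deg (Suc n) j h" "j \<ge> 1"
  shows "\<exists>D E. deg n (j-1) D \<and> deg n j E \<and> (\<forall>x\<in>cube n. \<forall>v\<in>{-1,1}. h (x(n := v)) = v * D x + E x)"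
proof -
  obtain a where a: "\<forall>S. S \<subseteq> {..<Suc n} \<longrightarrow> j < card S \<longrightarrow> a S = 0"
      "\<forall>x\<in>cube (Suc n). h x = (\<Sum>S\<in>Pow {..<Suc n}. a S * chi S x)"
    using assms(1) unfolding deg_def by blast
  define D where "D = (\<lambda>x. \<Sum>T\<in>Pow {..<n}. a (insert n T) * chi T x)"
  define E where "E = (\<lambda>x. \<Sum>T\<in>Pow {..<n}. a T * chi T x)"
  have "deg n (j-1) D"
    unfolding deg_def
  proof (intro exI[of _ "\<lambda>T. a (insert n T)"] conjI allI impI ballI)
    fix S assume S: "S \<subseteq> {..<n}" "j - 1 < card S"
    have "finite S" using S(1) finite_subset by blast
    moreover have "n \<notin> S" using S(1) by auto
    ultimately have "card (insert n S) = Suc (card S)" by simp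
    moreover have "insert n S \<subseteq> {..<Suc n}" using S(1) by auto
    moreover have "j < card (insert n S)" using \<open>card (insert n S) = Suc (card S)\<close> S(2) assms(2) by linarith
    ultimately show "a (insert n S) = 0" using a(1) by simp
  qed (simp add: D_def)
  moreover have "deg n j E"
    unfolding deg_def
  proof (intro exI[of _ a] conjI allI impI ballI)
    fix S assume S: "S \<subseteq> {..<n}" "j < card S"
    moreover have "S \<subseteq> {..<Suc n}" using S(1) by auto
    ultimately show "a S = 0" using a(1) by simp
  qed (simp add: E_def)
  moreover have "h (x(n := v)) = v * D x + E x" if x: "x \<in> cube n" and v: "v \<in> {-1,1}" for x v
  proof -
    have xs: "x(n := v) \<in> cube (Suc n)" unfolding cube_Suc_eq using x v by force
    have "h (x(n := v)) = (\<Sum>S\<in>Pow {..<n} \<union> insert n ` Pow {..<n}. a S * chi S (x(n := v)))"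
      using a(2) xs by (simp add: lessThan_Suc Pow_insert)
    also have "\<dots> = (\<Sum>S\<in>Pow {..<n}. a S * chi S (x(n := v))) + (\<Sum>S\<in>insert n ` Pow {..<n}. a S * chi S (x(n := v)))"
      by (intro sum.union_disjoint) auto
    also have "(\<Sum>S\<in>insert n ` Pow {..<n}. a S * chi S (x(n := v))) = (\<Sum>T\<in>Pow {..<n}. a (insert n T) * chi (insert n T) (x(n := v)))"
      by (subst sum.reindex[OF inj_on_insert_n]) simp
    also have "\<dots> = (\<Sum>T\<in>Pow {..<n}. v * (a (insert n T) * chi T x))"
    proof (intro sum.cong refl)
      fix T assume "T \<in> Pow {..<n}"
      then have "n \<notin> T" "finite T" using finite_subset by auto
      then show "a (insert n T) * chi (insert n T) (x(n := v)) = v * (a (insert n T) * chi T x)"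
        by (simp add: chi_upd_insert)
    qed
    also have "(\<Sum>S\<in>Pow {..<n}. a S * chi S (x(n := v))) = E x"
    proof -
      have "chi S (x(n := v)) = chi S x" if "S \<in> Pow {..<n}" for S
        using that by (intro chi_upd_notin) auto
      then show ?thesis unfolding E_def by (intro sum.cong refl) simp
    qed
    finally show ?thesis unfolding D_def sum_distrib_left by (simp only: add.commute)
  qed
  ultimately show ?thesis by blast
qed


lemma holder_int:
  assumes u: "\<And>x. x \<in> cube n \<Longrightarrow> u x \<ge> 0" and w: "\<And>x. x \<in> cube n \<Longrightarrow> w x \<ge> 0"
    and U: "ex n (\<lambda>x. u x ^ k) \<le> p ^ k" and W: "ex n (\<lambda>x. w x ^ k) \<le> r ^ k"
    and pr: "p \<ge> 0" "r \<ge> 0" and lk: "l \<le> k" "k > 0"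
  shows "ex n (\<lambda>x. u x ^ l * w x ^ (k - l)) \<le> p ^ l * r ^ (k - l)"
proof (cases "p > 0 \<and> r > 0")
  case True
  have pt: "u x ^ l * w x ^ (k - l) * real k \<le> p ^ l * r ^ (k - l) * (real l * (u x ^ k / p ^ k) + real (k - l) * (w x ^ k / r ^ k))"
    if x: "x \<in> cube n" for x
  proof -
    have "(u x / p) ^ l * (w x / r) ^ (k - l) * real k \<le> real l * (u x / p) ^ k + real (k - l) * (w x / r) ^ k"
      using u[OF x] w[OF x] True lk by (intro amgm) auto
    then have "p ^ l * r ^ (k - l) * ((u x / p) ^ l * (w x / r) ^ (k - l) * real k)
        \<le> p ^ l * r ^ (k - l) * (real l * (u x / p) ^ k + real (k - l) * (w x / r) ^ k)"
      using True by (intro mult_left_mono) auto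
    moreover have "p ^ l * (u x / p) ^ l = u x ^ l" using True by (simp add: power_divide)
    moreover have "r ^ (k - l) * (w x / r) ^ (k - l) = w x ^ (k - l)" using True by (simp add: power_divide)
    moreover have "p ^ l * r ^ (k - l) * ((u x / p) ^ l * (w x / r) ^ (k - l) * real k) =
        (p ^ l * (u x / p) ^ l) * (r ^ (k - l) * (w x / r) ^ (k - l)) * real k"
      by (simp only: mult_ac)
    moreover have "(u x / p) ^ k = u x ^ k / p ^ k" "(w x / r) ^ k = w x ^ k / r ^ k"
      by (simp_all add: power_divide)
    ultimately show ?thesis by simp
  qed
  have "ex n (\<lambda>x. u x ^ l * w x ^ (k - l)) * real k = ex n (\<lambda>x. u x ^ l * w x ^ (k - l) * real k)"
  proof -
    have "ex n (\<lambda>x. u x ^ l * w x ^ (k - l) * real k) = ex n (\<lambda>x. real k * (u x ^ l * w x ^ (k - l)))"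
      by (simp only: mult.commute)
    then show ?thesis by (simp only: ex_cmult mult.commute)
  qed
  also have "\<dots> \<le> ex n (\<lambda>x. p ^ l * r ^ (k - l) * (real l * (u x ^ k / p ^ k) + real (k - l) * (w x ^ k / r ^ k)))"
    by (rule ex_mono) (rule pt)
  also have "\<dots> = p ^ l * r ^ (k - l) * (real l * (ex n (\<lambda>x. u x ^ k) / p ^ k) + real (k - l) * (ex n (\<lambda>x. w x ^ k) / r ^ k))"
    by (simp only: ex_cmult ex_add ex_cdiv)
  also have "\<dots> \<le> p ^ l * r ^ (k - l) * (real l * 1 + real (k - l) * 1)"
    using True U W by (intro mult_left_mono add_mono mult_left_mono) (auto simp: divide_le_eq)
  also have "\<dots> = p ^ l * r ^ (k - l) * real k" using lk by (simp add: of_nat_diff)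
  finally show ?thesis using lk by simp
next
  case False
  then have "p = 0 \<or> r = 0" using pr by auto
  then show ?thesis
  proof
    assume p0: "p = 0"
    have uz: "u x = 0" if "x \<in> cube n" for x
      using ex_zero[of n "\<lambda>x. u x ^ k", OF _ _ that] U p0 u lk by (auto simp: zero_power)
    show ?thesis
    proof (cases "l = 0")
      case True then show ?thesis using W by simp
    next
      case False
      then have "ex n (\<lambda>x. u x ^ l * w x ^ (k - l)) = 0" by (intro ex_const) (simp add: uz)
      then show ?thesis using p0 False by (simp add: zero_power)
    qed
  next
    assume r0: "r = 0"
    have wz: "w x = 0" if "x \<in> cube n" for x
      using ex_zero[of n "\<lambda>x. w x ^ k", OF _ _ that] W r0 w lk by (auto simp: zero_power)
    show ?thesis
    proof (cases "l = k")
      case True then show ?thesis using U by simp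
    next
      case False
      then have "ex n (\<lambda>x. u x ^ l * w x ^ (k - l)) = 0" using lk by (intro ex_const) (simp add: wz)
      then show ?thesis using r0 False lk by (simp add: zero_power)
    qed
  qed
qed


lemma bonami_const:
  assumes "\<And>x. x \<in> cube n \<Longrightarrow> h x = a" "k \<ge> 1"
  shows "ex n (\<lambda>x. h x ^ (2*k)) \<le> (2 * real k - 1) ^ (j*k) * ex n (\<lambda>x. (h x)^2) ^ k"
proof -
  have "ex n (\<lambda>x. h x ^ (2*k)) = a ^ (2*k)" using assms by (intro ex_const) simp
  moreover have "ex n (\<lambda>x. (h x)^2) = a^2" using assms by (intro ex_const) simp
  moreover have "(2 * real k - 1) ^ (j*k) \<ge> 1" using assms(2) by (intro one_le_power) simp
  moreover have "(a^2)^k = a^(2*k)" by (simp add: power_mult)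
  moreover have "a^(2*k) \<ge> 0" by (simp add: power_mult)
  ultimately show ?thesis using mult_right_mono[of 1 "(2 * real k - 1) ^ (j*k)" "a^(2*k)"] by simp
qed

lemma exp_arith: fixes j k l :: nat assumes "j \<ge> 1" "l \<le> k" shows "l + (j - 1) * l + j * (k - l) = j * k"
proof -
  obtain j' where j: "j = Suc j'" using assms(1) by (cases j) auto
  obtain m where m: "k = l + m" using assms(2) le_Suc_ex by blast
  show ?thesis unfolding j m by (simp add: algebra_simps)
qed

lemma bonami:
  assumes "k \<ge> 1"
  shows "deg n j h \<Longrightarrow> ex n (\<lambda>x. h x ^ (2*k)) \<le> (2 * real k - 1) ^ (j*k) * ex n (\<lambda>x. (h x)^2) ^ k"
proof (induction n arbitrary: j h)
  case 0
  then obtain a where "\<forall>x\<in>cube 0. h x = a" using deg_const by blast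
  then show ?case using bonami_const assms by blast
next
  case (Suc n)
  show ?case
  proof (cases "j = 0")
    case True
    then obtain a where "\<forall>x\<in>cube (Suc n). h x = a" using deg_const Suc.prems by blast
    then show ?thesis using bonami_const assms by blast
  next
    case False
    then have j1: "j \<ge> 1" by simp
    obtain D E where DE: "deg n (j-1) D" "deg n j E"
      "\<forall>x\<in>cube n. \<forall>v\<in>{-1,1}. h (x(n := v)) = v * D x + E x"
      using deg_split[OF Suc.prems j1] by blast
    define c where "c = 2 * real k - 1"
    have c1: "c \<ge> 1" using assms unfolding c_def by simp
    define a2 where "a2 = ex n (\<lambda>x. (D x)^2)"
    define b2 where "b2 = ex n (\<lambda>x. (E x)^2)"
    have a2: "a2 \<ge> 0" unfolding a2_def by (intro ex_nonneg) simp
    have b2: "b2 \<ge> 0" unfolding b2_def by (intro ex_nonneg) simp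
    have IHD: "ex n (\<lambda>x. D x ^ (2*k)) \<le> c ^ ((j-1)*k) * a2 ^ k"
      using Suc.IH[OF DE(1)] unfolding c_def a2_def .
    have IHE: "ex n (\<lambda>x. E x ^ (2*k)) \<le> c ^ (j*k) * b2 ^ k"
      using Suc.IH[OF DE(2)] unfolding c_def b2_def .
    have hp: "h (x(n := 1)) = E x + D x" "h (x(n := -1)) = E x - D x" if "x \<in> cube n" for x
      using DE(3) that by auto
    have h2: "ex (Suc n) (\<lambda>x. (h x)^2) = a2 + b2"
    proof -
      have "ex (Suc n) (\<lambda>x. (h x)^2) = ex n (\<lambda>x. (D x)^2 + (E x)^2)"
      unfolding ex_Suc
    proof (intro ex_cong)
      fix x assume x: "x \<in> cube n"
      show "((h (x(n := 1)))\<^sup>2 + (h (x(n := -1)))\<^sup>2) / 2 = (D x)^2 + (E x)^2"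
        unfolding hp[OF x] by (simp add: power2_eq_square field_simps)
    qed
      then show ?thesis unfolding a2_def b2_def ex_add .
    qed
    have h2k: "ex (Suc n) (\<lambda>x. h x ^ (2*k)) =
        (\<Sum>l\<le>k. real (2*k choose (2*l)) * ex n (\<lambda>x. ((D x)^2)^l * ((E x)^2)^(k-l)))"
    proof -
      have "ex (Suc n) (\<lambda>x. h x ^ (2*k)) =
          ex n (\<lambda>x. \<Sum>l\<le>k. real (2*k choose (2*l)) * (((D x)^2)^l * ((E x)^2)^(k-l)))"
        unfolding ex_Suc by (intro ex_cong) (simp add: hp even_expand mult.assoc)
      then show ?thesis by (simp add: ex_sum ex_cmult)
    qed
    define p where "p = c ^ (j-1) * a2"
    define r where "r = c ^ j * b2"
    have p0: "p \<ge> 0" unfolding p_def using c1 a2 by simp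
    have r0: "r \<ge> 0" unfolding r_def using c1 b2 by simp
    have tm: "real (2*k choose (2*l)) * ex n (\<lambda>x. ((D x)^2)^l * ((E x)^2)^(k-l))
        \<le> real (k choose l) * c ^ (j*k) * (a2^l * b2^(k-l))" if l: "l \<le> k" for l
    proof -
      have "ex n (\<lambda>x. ((D x)^2)^k) \<le> p ^ k"
        using IHD unfolding p_def by (simp add: power_mult power_mult_distrib)
      moreover have "ex n (\<lambda>x. ((E x)^2)^k) \<le> r ^ k"
        using IHE unfolding r_def by (simp add: power_mult power_mult_distrib)
      ultimately have H: "ex n (\<lambda>x. ((D x)^2)^l * ((E x)^2)^(k-l)) \<le> p ^ l * r ^ (k - l)"
        using p0 r0 l assms by (intro holder_int) auto
      have X: "ex n (\<lambda>x. ((D x)^2)^l * ((E x)^2)^(k-l)) \<ge> 0" by (intro ex_nonneg) simp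
      have "real (2*k choose (2*l)) * ex n (\<lambda>x. ((D x)^2)^l * ((E x)^2)^(k-l))
          \<le> (real (k choose l) * c ^ l) * (p ^ l * r ^ (k - l))"
        using binom_cmp[OF l] H X unfolding c_def by (intro mult_mono) auto
      also have "(real (k choose l) * c ^ l) * (p ^ l * r ^ (k - l)) =
          real (k choose l) * (c ^ l * c ^ ((j-1)*l) * c ^ (j*(k-l))) * (a2^l * b2^(k-l))"
      proof -
        have "p ^ l = c ^ ((j-1)*l) * a2^l" unfolding p_def by (simp add: power_mult_distrib power_mult)
        moreover have "r ^ (k-l) = c ^ (j*(k-l)) * b2^(k-l)" unfolding r_def by (simp add: power_mult_distrib power_mult)
        ultimately show ?thesis by (simp only: mult_ac)
      qed
      also have "c ^ l * c ^ ((j-1)*l) * c ^ (j*(k-l)) = c ^ (j*k)"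
        by (simp only: power_add[symmetric] exp_arith[OF j1 l])
      finally show ?thesis .
    qed
    have "ex (Suc n) (\<lambda>x. h x ^ (2*k)) \<le> (\<Sum>l\<le>k. real (k choose l) * c ^ (j*k) * (a2^l * b2^(k-l)))"
      unfolding h2k by (intro sum_mono tm) simp
    also have "\<dots> = c ^ (j*k) * (a2 + b2) ^ k"
      by (simp add: binomial_ring sum_distrib_left mult_ac)
    finally show ?thesis unfolding h2 c_def .
  qed
qed


lemma expect_rad: "measure_pmf.expectation (rad n) F = ex n F"
  unfolding rad_def ex_def using integral_pmf_of_set[OF cube_ne cube_finite, of n F] cube_card[of n] by simp

lemma prob_rad: "measure_pmf.prob (rad n) A = real (card (cube n \<inter> A)) / 2 ^ n"
  unfolding rad_def using measure_pmf_of_set[OF cube_ne cube_finite, of n A] cube_card[of n] by simp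

lemma ex_orth: "S \<subseteq> {..<n} \<Longrightarrow> T \<subseteq> {..<n} \<Longrightarrow> ex n (\<lambda>x. chi S x * chi T x) = (if S = T then 1 else 0)"
  unfolding ex_def using chi_orth by simp

lemma ex_lin_orth:
  assumes "finite I" "I \<subseteq> Pow {..<n}" "S \<subseteq> {..<n}"
  shows "ex n (\<lambda>x. chi S x * (\<Sum>T\<in>I. a T * chi T x)) = (if S \<in> I then a S else 0)"
proof -
  have "ex n (\<lambda>x. chi S x * (\<Sum>T\<in>I. a T * chi T x)) = ex n (\<lambda>x. \<Sum>T\<in>I. a T * (chi S x * chi T x))"
    by (simp add: sum_distrib_left mult_ac)
  also have "\<dots> = (\<Sum>T\<in>I. a T * ex n (\<lambda>x. chi S x * chi T x))"
    using assms(1) by (simp add: ex_sum ex_cmult)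
  also have "\<dots> = (\<Sum>T\<in>I. if T = S then a T else 0)"
  proof (intro sum.cong refl)
    fix T assume "T \<in> I"
    then have T: "T \<subseteq> {..<n}" using assms(2) by auto
    show "a T * ex n (\<lambda>x. chi S x * chi T x) = (if T = S then a T else 0)"
      using ex_orth[OF assms(3) T] by auto
  qed
  also have "\<dots> = (if S \<in> I then a S else 0)"
    using assms(1) by (simp add: sum.delta')
  finally show ?thesis .
qed

lemma ex_sq_orth:
  assumes "finite I" "I \<subseteq> Pow {..<n}"
  shows "ex n (\<lambda>x. (\<Sum>T\<in>I. a T * chi T x)^2) = (\<Sum>T\<in>I. (a T)^2)"
proof -
  have "ex n (\<lambda>x. (\<Sum>T\<in>I. a T * chi T x)^2) = ex n (\<lambda>x. \<Sum>S\<in>I. a S * (chi S x * (\<Sum>T\<in>I. a T * chi T x)))"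
    by (simp add: power2_eq_square sum_distrib_right mult_ac)
  also have "\<dots> = (\<Sum>S\<in>I. a S * ex n (\<lambda>x. chi S x * (\<Sum>T\<in>I. a T * chi T x)))"
    using assms(1) by (simp add: ex_sum ex_cmult)
  also have "\<dots> = (\<Sum>S\<in>I. (a S)^2)"
  proof (intro sum.cong refl)
    fix S assume S: "S \<in> I"
    have Sn: "S \<subseteq> {..<n}" using S assms(2) by auto
    show "a S * ex n (\<lambda>x. chi S x * (\<Sum>T\<in>I. a T * chi T x)) = (a S)^2"
      using ex_lin_orth[OF assms Sn] S by (simp add: power2_eq_square)
  qed
  finally show ?thesis .
qed

lemma power_sum_le:
  fixes y :: "nat \<Rightarrow> real"
  assumes "finite A" "A \<noteq> {}" "k \<ge> 1"
  shows "(\<Sum>i\<in>A. y i)^(2*k) \<le> real (card A)^(2*k-1) * (\<Sum>i\<in>A. y i^(2*k))"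
proof -
  define N where "N = real (card A)"
  have N: "N > 0" using assms unfolding N_def by (simp add: card_gt_0_iff)
  have "(\<Sum>i\<in>A. (1/N) *\<^sub>R y i)^(2*k) \<le> (\<Sum>i\<in>A. (1/N) * (y i)^(2*k))"
    using convex_on_sum[OF assms(1,2) convex_power_even[of "2*k"], of "\<lambda>_. 1/N" y] N
    by (simp add: N_def)
  also have "(\<Sum>i\<in>A. (1/N) *\<^sub>R y i) = (\<Sum>i\<in>A. y i) / N"
    by (simp add: sum_divide_distrib)
  also have "(\<Sum>i\<in>A. (1/N) * (y i)^(2*k)) = (\<Sum>i\<in>A. y i^(2*k)) / N"
    by (simp add: sum_divide_distrib)
  finally have "(\<Sum>i\<in>A. y i)^(2*k) / N^(2*k) \<le> (\<Sum>i\<in>A. y i^(2*k)) / N"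
    by (simp add: power_divide)
  then have "(\<Sum>i\<in>A. y i)^(2*k) \<le> (\<Sum>i\<in>A. y i^(2*k)) / N * N^(2*k)"
    using N by (simp add: divide_le_eq)
  also have "N^(2*k) = N * N^(2*k-1)"
    using assms(3) by (metis Suc_pred' mult_pos_pos pos2 less_le_trans less_numeral_extra(1) power_Suc[of N] order.refl)
  finally show ?thesis using N unfolding N_def by (simp add: mult_ac)
qed

lemma markov_cube:
  assumes "t > 0"
  shows "real (card (cube n \<inter> {x. t \<le> \<bar>g x\<bar>})) / 2^n \<le> ex n (\<lambda>x. g x ^ (2*k)) / t^(2*k)"
proof -
  define A where "A = cube n \<inter> {x. t \<le> \<bar>g x\<bar>}"
  have "real (card A) * t^(2*k) = (\<Sum>x\<in>A. t^(2*k))" by simp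
  also have "\<dots> \<le> (\<Sum>x\<in>A. g x ^ (2*k))"
  proof (intro sum_mono)
    fix x assume "x \<in> A"
    then have "t^(2*k) \<le> \<bar>g x\<bar>^(2*k)" using assms unfolding A_def by (intro power_mono) auto
    then show "t^(2*k) \<le> g x ^ (2*k)" by (simp add: power_even_abs)
  qed
  also have "\<dots> \<le> (\<Sum>x\<in>cube n. g x ^ (2*k))"
    unfolding A_def by (intro sum_mono2) (auto simp: zero_le_even_power)
  also have "\<dots> = 2^n * ex n (\<lambda>x. g x ^ (2*k))" unfolding ex_def by simp
  finally have "real (card A) * t^(2*k) \<le> 2^n * ex n (\<lambda>x. g x ^ (2*k))" .
  then show ?thesis unfolding A_def using assms by (simp add: field_simps)
qed

theorem proposition2p3:
  fixes n d :: nat and f :: "(nat \<Rightarrow> real) \<Rightarrow> real" and c :: "nat set \<Rightarrow> real" and t :: real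
  assumes "d \<le> n"
    and "\<forall>x\<in>cube n. f x = (\<Sum>S\<in>{S. S \<subseteq> {..<n} \<and> card S \<le> d}. c S * chi S x)"
    and "t > 0"
  shows "measure_pmf.prob (rad n)
           {x. \<bar>f x - measure_pmf.expectation (rad n) f\<bar> \<ge> t}
         \<le> (let J = {j\<in>{1..d}. weight n f j \<noteq> 0} in
            if J = {} then 0
            else exp (1 - Min ((\<lambda>j. (t / (real d * exp 1 * sqrt (weight n f j))) powr (2 / real j)) ` J)))"
proof -
  define I where "I = {S. S \<subseteq> {..<n} \<and> card S \<le> d}"
  define L where "L = (\<lambda>j. {S. S \<subseteq> {..<n} \<and> card S = j})"
  define fj where "fj = (\<lambda>j x. \<Sum>S\<in>L j. c S * chi S x)"
  define W where "W = weight n f"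
  have IP: "I \<subseteq> Pow {..<n}" unfolding I_def by auto
  have fI: "finite I" using IP finite_subset by blast
  have LP: "L j \<subseteq> Pow {..<n}" for j unfolding L_def by auto
  have fL: "finite (L j)" for j using LP finite_subset by blast
  have fx: "f x = (\<Sum>T\<in>I. c T * chi T x)" if "x \<in> cube n" for x
    using assms(2) that unfolding I_def by blast
  have four: "fourier n f S = c S" if S: "S \<in> I" for S
  proof -
    have "fourier n f S = ex n (\<lambda>x. chi S x * (\<Sum>T\<in>I. c T * chi T x))"
      unfolding fourier_def expect_rad by (intro ex_cong) (simp add: fx)
    also have "\<dots> = c S" using ex_lin_orth[OF fI IP] S IP by auto
    finally show ?thesis .
  qed
  have Ef: "measure_pmf.expectation (rad n) f = c {}"
  proof -
    have "measure_pmf.expectation (rad n) f = fourier n f {}"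
      unfolding fourier_def expect_rad by (intro ex_cong) (simp add: chi_def)
    also have "\<dots> = c {}" by (intro four) (simp add: I_def)
    finally show ?thesis .
  qed
  have Wj: "W j = (\<Sum>S\<in>L j. (c S)^2)" if "j \<le> d" for j
    unfolding W_def weight_def L_def
    by (intro sum.cong refl) (auto simp: four I_def that)
  have exfj2: "ex n (\<lambda>x. (fj j x)^2) = W j" if "j \<le> d" for j
    unfolding fj_def Wj[OF that] by (rule ex_sq_orth[OF fL LP])
  have degfj: "deg n j (fj j)" for j
    unfolding deg_def
  proof (intro exI[of _ "\<lambda>S. if card S = j then c S else 0"] conjI allI impI ballI)
    fix x assume "x \<in> cube n"
    have "(\<Sum>S\<in>Pow {..<n}. (if card S = j then c S else 0) * chi S x)
        = (\<Sum>S\<in>Pow {..<n}. if card S = j then c S * chi S x else 0)"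
      by (intro sum.cong refl) auto
    also have "\<dots> = (\<Sum>S\<in>{S\<in>Pow {..<n}. card S = j}. c S * chi S x)"
      using sum.inter_filter[of "Pow {..<n}" "\<lambda>S. c S * chi S x" "\<lambda>S. card S = j"] by simp
    also have "{S\<in>Pow {..<n}. card S = j} = L j" unfolding L_def by auto
    finally show "fj j x = (\<Sum>S\<in>Pow {..<n}. (if card S = j then c S else 0) * chi S x)"
      unfolding fj_def by simp
  qed auto
  have L0: "L 0 = {{}}"
  proof -
    have "S = {}" if "S \<subseteq> {..<n}" "card S = 0" for S
      using that finite_subset[OF that(1)] by auto
    then show ?thesis unfolding L_def by auto
  qed
  have decomp: "f x - measure_pmf.expectation (rad n) f = (\<Sum>j\<in>{1..d}. fj j x)" if x: "x \<in> cube n" for x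
  proof -
    have "f x = (\<Sum>j\<in>{..d}. \<Sum>T\<in>{T\<in>I. card T = j}. c T * chi T x)"
      unfolding fx[OF x] by (rule sum.group[symmetric]) (auto simp: fI I_def)
    also have "\<dots> = (\<Sum>j\<in>{..d}. fj j x)"
      unfolding fj_def by (intro sum.cong refl) (auto simp: I_def L_def)
    also have "{..d} = insert 0 {1..d}" by auto
    also have "(\<Sum>j\<in>insert 0 {1..d}. fj j x) = fj 0 x + (\<Sum>j\<in>{1..d}. fj j x)"
      by (subst sum.insert) auto
    also have "fj 0 x = c {}" unfolding fj_def L0 by (simp add: chi_def)
    finally show ?thesis unfolding Ef by simp
  qed
  define J where "J = {j\<in>{1..d}. W j \<noteq> 0}"
  define X where "X = (\<lambda>j. t / (real d * exp 1 * sqrt (W j)))"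
  define P where "P = Min ((\<lambda>j. X j powr (2 / real j)) ` J)"
  define A where "A = {x. t \<le> \<bar>f x - measure_pmf.expectation (rad n) f\<bar>}"
  have goal: "measure_pmf.prob (rad n) A \<le> (if J = {} then 0 else exp (1 - P))"
  proof (cases "J = {}")
    case True
    have "fj j x = 0" if "j \<in> {1..d}" "x \<in> cube n" for j x
    proof -
      have "W j = 0" using True that unfolding J_def by auto
      then show ?thesis using exfj2[of j] that ex_zero[of n "\<lambda>x. (fj j x)^2" x] by auto
    qed
    then have "cube n \<inter> A = {}" unfolding A_def using decomp assms(3) by auto
    then show ?thesis using True by (simp add: prob_rad)
  next
    case False
    then have d1: "d \<ge> 1" unfolding J_def by auto
    show ?thesis
    proof (cases "P < 1")
      case True
      then have "1 < exp (1 - P)" by simp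
      moreover have "measure_pmf.prob (rad n) A \<le> 1" by (rule measure_pmf.prob_le_1)
      ultimately have "measure_pmf.prob (rad n) A \<le> exp (1 - P)" by linarith
      then show ?thesis using False by simp
    next
      case Pge: False
      define m where "m = \<lfloor>(P + 1) / 2\<rfloor>"
      have m1: "m \<ge> 1" using Pge unfolding m_def by (simp add: le_floor_iff)
      have m2: "real_of_int m \<le> (P + 1) / 2" "(P + 1) / 2 < real_of_int m + 1"
        unfolding m_def by (rule of_int_floor_le, rule real_of_int_floor_add_one_gt)
      define k where "k = nat m"
      have km: "real k = real_of_int m" unfolding k_def using m1 by simp
      have k1: "k \<ge> 1" using m1 unfolding k_def by simp
      have m3: "2 * real_of_int m \<le> P + 1" using m2(1) by (simp add: field_simps)
      have m4: "P + 1 < 2 * real_of_int m + 2" using m2(2) by (simp add: field_simps)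
      have kP1: "2 * real k - 1 \<le> P" unfolding km using m3 by linarith
      have kP2: "P < 2 * real k + 1" unfolding km using m4 by linarith
      define cc where "cc = 2 * real k - 1"
      have cc1: "cc \<ge> 1" using k1 unfolding cc_def by simp
      define B where "B = (t / (real d * exp 1))^2"
      have Bj: "cc ^ j * W j \<le> B" if j: "j \<in> {1..d}" for j
      proof (cases "W j = 0")
        case True then show ?thesis unfolding B_def by simp
      next
        case False
        then have jJ: "j \<in> J" using j unfolding J_def by auto
        have W0: "W j > 0" using False exfj2[of j] ex_nonneg[of n "\<lambda>x. (fj j x)^2"] j by force
        have X0: "X j > 0" unfolding X_def using W0 d1 assms(3) by simp
        have fJ: "finite J" unfolding J_def by simp
        have "P \<le> X j powr (2 / real j)" unfolding P_def using jJ fJ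
          by (intro Min_le) auto
        then have "cc \<le> X j powr (2 / real j)" using kP1 unfolding cc_def by linarith
        then have "cc ^ j \<le> (X j powr (2 / real j)) ^ j" using cc1 by (intro power_mono) auto
        also have "(X j powr (2 / real j)) ^ j = (X j powr (2 / real j)) powr (real j)"
          by (rule powr_realpow[symmetric]) (use X0 in auto)
        also have "\<dots> = X j powr (2 / real j * real j)" by (rule powr_powr)
        also have "2 / real j * real j = 2" using j by simp
        also have "X j powr 2 = (X j)^2" using X0 by simp
        finally have "cc ^ j * W j \<le> (X j)^2 * W j" using W0 by (intro mult_right_mono) auto
        also have "(X j)^2 * W j = B"
        proof -
          define q where "q = sqrt (W j)"
          have q: "q > 0" "q^2 = W j" unfolding q_def using W0 by auto
          have Xq: "X j = t / (real d * exp 1 * q)" unfolding X_def q_def by simp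
          have "(X j)^2 * W j = (t / (real d * exp 1 * q))^2 * q^2" unfolding Xq q(2) ..
          also have "\<dots> = (t / (real d * exp 1))^2" using q(1) by (simp add: power_divide power_mult_distrib)
          finally show ?thesis unfolding B_def .
        qed
        finally show ?thesis .
      qed
      define g where "g = (\<lambda>x. f x - measure_pmf.expectation (rad n) f)"
      have "ex n (\<lambda>x. g x ^ (2*k)) \<le> ex n (\<lambda>x. real d ^ (2*k-1) * (\<Sum>j\<in>{1..d}. fj j x ^ (2*k)))"
      proof (intro ex_mono)
        fix x assume x: "x \<in> cube n"
        show "g x ^ (2*k) \<le> real d ^ (2*k-1) * (\<Sum>j\<in>{1..d}. fj j x ^ (2*k))"
          unfolding g_def decomp[OF x] using power_sum_le[of "{1..d}" k "\<lambda>j. fj j x"] d1 k1 by simp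
      qed
      also have "\<dots> = real d ^ (2*k-1) * (\<Sum>j\<in>{1..d}. ex n (\<lambda>x. fj j x ^ (2*k)))"
        by (simp add: ex_cmult ex_sum)
      also have "\<dots> \<le> real d ^ (2*k-1) * (\<Sum>j\<in>{1..d}. B ^ k)"
      proof (intro mult_left_mono sum_mono)
        fix j assume j: "j \<in> {1..d}"
        have "ex n (\<lambda>x. fj j x ^ (2*k)) \<le> cc ^ (j*k) * ex n (\<lambda>x. (fj j x)^2) ^ k"
          using bonami[OF k1 degfj] unfolding cc_def .
        also have "\<dots> = (cc ^ j * W j) ^ k" using j exfj2[of j] by (simp add: power_mult power_mult_distrib)
        also have "\<dots> \<le> B ^ k"
          using Bj[OF j] cc1 exfj2[of j] ex_nonneg[of n "\<lambda>x. (fj j x)^2"] j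
          by (intro power_mono) auto
        finally show "ex n (\<lambda>x. fj j x ^ (2*k)) \<le> B ^ k" .
      qed simp
      also have "\<dots> = real d ^ (2*k) * B ^ k"
      proof -
        have e: "2*k = Suc (2*k-1)" using k1 by simp
        have "real d^(2*k) = real d * real d^(2*k-1)" by (subst e) (simp only: power_Suc)
        then show ?thesis by simp
      qed
      also have "\<dots> = (t / exp 1) ^ (2*k)"
        unfolding B_def using d1 by (simp add: power_mult[symmetric] power_divide power_mult_distrib)
      finally have mom: "ex n (\<lambda>x. g x ^ (2*k)) \<le> (t / exp 1) ^ (2*k)" .
      have "measure_pmf.prob (rad n) A = real (card (cube n \<inter> {x. t \<le> \<bar>g x\<bar>})) / 2^n"
        unfolding prob_rad A_def g_def ..
      also have "\<dots> \<le> ex n (\<lambda>x. g x ^ (2*k)) / t^(2*k)" by (rule markov_cube[OF assms(3)])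
      also have "\<dots> \<le> (t / exp 1) ^ (2*k) / t^(2*k)"
        using mom assms(3) by (intro divide_right_mono) auto
      also have "\<dots> = exp (- real (2*k))"
        using assms(3) by (simp add: power_divide exp_of_nat_mult[symmetric] exp_minus field_simps)
      also have "\<dots> \<le> exp (1 - P)" using kP2 by simp
      finally show ?thesis using False by simp
    qed
  qed
  show ?thesis using goal unfolding A_def J_def P_def X_def W_def Let_def by simp
qed

end
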